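(* Let $R$ be a ring and $N$ a right $R$-module with a filtration $(N_\alpha \mid \alpha \leq \tau)$ (for some ordinal $\tau$). Let $M$ be a finitely generated right $R$-module such that for each $\alpha < \tau$, each submodule $K$ with $N_\alpha \subseteq K \subseteq N_{\alpha+1}$, and each $f \in \mathrm{Hom}_R(M, N_{\alpha+1}/K)$, there exists $g \in \mathrm{Hom}_R(M, N_{\alpha+1})$ with $f = \pi_K g$, where $\pi_K : N_{\alpha+1} \to N_{\alpha+1}/K$ is the canonical projection. Then $M$ is $N$-projective.
   Context: A chain $(N_\alpha \mid \alpha \leq \tau)$ of submodules of $N$ is a filtration of $N$ if $\tau$ is an ordinal, $N_0 = 0$, $N_\alpha \subseteq N_{\alpha+1}$ for each $\alpha < \tau$, $N_\alpha = \bigcup_{\beta<\alpha} N_\beta$ for each limit ordinal $\alpha \leq \tau$, and $N_\tau = N$. A module $M$ is $N$-projective if for every submodule $P \subseteq N$, every homomorphism $M \to N/P$ factors through the canonical projection $N \to N/P$. *)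

theory Defs
  imports Main
begin

text \<open>A module is given by a carrier set inside an ambient abelian group type 'm
  (whose addition, zero and negation are the module operations) together with a
  right scalar action s :: 'm => 'r => 'm, written s x r for x r.\<close>

definition right_module :: "('m::ab_group_add \<Rightarrow> 'r::ring_1 \<Rightarrow> 'm) \<Rightarrow> 'm set \<Rightarrow> bool" where
  "right_module s M \<longleftrightarrow>
     0 \<in> M \<and> (\<forall>x\<in>M. \<forall>y\<in>M. x + y \<in> M) \<and> (\<forall>x\<in>M. - x \<in> M) \<and>
     (\<forall>x\<in>M. \<forall>r. s x r \<in> M) \<and>
     (\<forall>x\<in>M. \<forall>y\<in>M. \<forall>r. s (x + y) r = s x r + s y r) \<and>
     (\<forall>x\<in>M. \<forall>r r'. s x (r + r') = s x r + s x r') \<and>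
     (\<forall>x\<in>M. \<forall>r r'. s x (r * r') = s (s x r) r') \<and>
     (\<forall>x\<in>M. s x 1 = x)"

definition submodule :: "('m::ab_group_add \<Rightarrow> 'r::ring_1 \<Rightarrow> 'm) \<Rightarrow> 'm set \<Rightarrow> 'm set \<Rightarrow> bool" where
  "submodule s P M \<longleftrightarrow> P \<subseteq> M \<and> right_module s P"

definition finitely_generated :: "('m::ab_group_add \<Rightarrow> 'r::ring_1 \<Rightarrow> 'm) \<Rightarrow> 'm set \<Rightarrow> bool" where
  "finitely_generated s M \<longleftrightarrow>
     (\<exists>G. finite G \<and> G \<subseteq> M \<and> (\<forall>P. submodule s P M \<and> G \<subseteq> P \<longrightarrow> P = M))"

definition mod_hom :: "('m::ab_group_add \<Rightarrow> 'r::ring_1 \<Rightarrow> 'm) \<Rightarrow> 'm set \<Rightarrow>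
    ('n::ab_group_add \<Rightarrow> 'r \<Rightarrow> 'n) \<Rightarrow> 'n set \<Rightarrow> ('m \<Rightarrow> 'n) \<Rightarrow> bool" where
  "mod_hom sM M sN N g \<longleftrightarrow>
     (\<forall>x\<in>M. g x \<in> N) \<and> (\<forall>x\<in>M. \<forall>y\<in>M. g (x + y) = g x + g y) \<and>
     (\<forall>x\<in>M. \<forall>r. g (sM x r) = sN (g x) r)"

text \<open>Quotient module N/P: its elements are the cosets x + P (x in N), with the
  induced operations.\<close>
definition coset :: "'n::ab_group_add \<Rightarrow> 'n set \<Rightarrow> 'n set" where
  "coset x P = (\<lambda>p. x + p) ` P"

definition quot :: "'n::ab_group_add set \<Rightarrow> 'n set \<Rightarrow> 'n set set" where
  "quot N P = {coset x P | x. x \<in> N}"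

definition quot_add :: "'n::ab_group_add set \<Rightarrow> 'n set \<Rightarrow> 'n set" where
  "quot_add C D = {a + b | a b. a \<in> C \<and> b \<in> D}"

definition quot_scal :: "('n::ab_group_add \<Rightarrow> 'r \<Rightarrow> 'n) \<Rightarrow> 'n set \<Rightarrow> 'n set \<Rightarrow> 'r \<Rightarrow> 'n set" where
  "quot_scal sN P C r = {sN a r + p | a p. a \<in> C \<and> p \<in> P}"

definition quot_hom :: "('m::ab_group_add \<Rightarrow> 'r::ring_1 \<Rightarrow> 'm) \<Rightarrow> 'm set \<Rightarrow>
    ('n::ab_group_add \<Rightarrow> 'r \<Rightarrow> 'n) \<Rightarrow> 'n set \<Rightarrow> 'n set \<Rightarrow> ('m \<Rightarrow> 'n set) \<Rightarrow> bool" where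
  "quot_hom sM M sN N P f \<longleftrightarrow>
     (\<forall>x\<in>M. f x \<in> quot N P) \<and> (\<forall>x\<in>M. \<forall>y\<in>M. f (x + y) = quot_add (f x) (f y)) \<and>
     (\<forall>x\<in>M. \<forall>r. f (sM x r) = quot_scal sN P (f x) r)"

definition N_projective :: "('m::ab_group_add \<Rightarrow> 'r::ring_1 \<Rightarrow> 'm) \<Rightarrow> 'm set \<Rightarrow>
    ('n::ab_group_add \<Rightarrow> 'r \<Rightarrow> 'n) \<Rightarrow> 'n set \<Rightarrow> bool" where
  "N_projective sM M sN N \<longleftrightarrow>
     (\<forall>P f. submodule sN P N \<and> quot_hom sM M sN N P f \<longrightarrow>
        (\<exists>g. mod_hom sM M sN N g \<and> (\<forall>x\<in>M. f x = coset (g x) P)))"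

text \<open>Ordinals: indices alpha <= tau in an arbitrary well-ordered type 'i.
  Successor alpha+1 is the least element above alpha; zero is the least element.\<close>
definition osucc :: "'i::wellorder \<Rightarrow> 'i" where
  "osucc a = (LEAST b. a < b)"

definition is_limit :: "'i::wellorder \<Rightarrow> bool" where
  "is_limit a \<longleftrightarrow> (\<exists>b. b < a) \<and> (\<forall>b<a. \<exists>c. b < c \<and> c < a)"

definition filtration :: "('n::ab_group_add \<Rightarrow> 'r::ring_1 \<Rightarrow> 'n) \<Rightarrow> 'n set \<Rightarrow>
    'i::wellorder \<Rightarrow> ('i \<Rightarrow> 'n set) \<Rightarrow> bool" where
  "filtration sN N \<tau> Nf \<longleftrightarrow>
     (\<forall>a\<le>\<tau>. submodule sN (Nf a) N) \<and>
     (\<forall>a. (\<forall>b. a \<le> b) \<longrightarrow> Nf a = {0}) \<and>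
     (\<forall>a<\<tau>. Nf a \<subseteq> Nf (osucc a)) \<and>
     (\<forall>a\<le>\<tau>. is_limit a \<longrightarrow> Nf a = (\<Union>b\<in>{b. b < a}. Nf b)) \<and>
     Nf \<tau> = N"

end

theory Submission imports Defs begin
lemma rm_zero: "right_module s M \<Longrightarrow> 0 \<in> M" by (simp add: right_module_def)
lemma rm_add: "right_module s M \<Longrightarrow> x\<in>M \<Longrightarrow> y\<in>M \<Longrightarrow> x+y \<in> M" by (simp add: right_module_def)
lemma rm_neg: "right_module s M \<Longrightarrow> x\<in>M \<Longrightarrow> -x \<in> M" by (simp add: right_module_def)
lemma rm_scal: "right_module s M \<Longrightarrow> x\<in>M \<Longrightarrow> s x r \<in> M" by (simp add: right_module_def)
lemma rm_diff: "right_module s M \<Longrightarrow> x\<in>M \<Longrightarrow> y\<in>M \<Longrightarrow> x-y \<in> M"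
  using rm_add rm_neg by (metis diff_conv_add_uminus)
lemma rm_distl: "right_module s M \<Longrightarrow> x\<in>M \<Longrightarrow> y\<in>M \<Longrightarrow> s (x+y) r = s x r + s y r" by (simp add: right_module_def)
lemma rm_distr: "right_module s M \<Longrightarrow> x\<in>M \<Longrightarrow> s x (r+r') = s x r + s x r'" by (simp add: right_module_def)
lemma rm_assoc: "right_module s M \<Longrightarrow> x\<in>M \<Longrightarrow> s x (r*r') = s (s x r) r'" by (simp add: right_module_def)
lemma rm_one: "right_module s M \<Longrightarrow> x\<in>M \<Longrightarrow> s x 1 = x" by (simp add: right_module_def)
lemma rm_s0: "right_module s M \<Longrightarrow> x\<in>M \<Longrightarrow> s x 0 = 0"
  using rm_distr[of s M x 0 0] by simp
lemma rm_0s: "right_module s M \<Longrightarrow> s 0 r = 0"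
  using rm_distl[of s M 0 0 r] rm_zero[of s M] by simp
lemma rm_sneg: "right_module s M \<Longrightarrow> x\<in>M \<Longrightarrow> s (-x) r = - s x r"
  using rm_distl[of s M x "-x" r] rm_neg[of s M x] rm_0s[of s M r]
  by (simp add: eq_neg_iff_add_eq_0 add.commute)
lemma rm_sdiff: "right_module s M \<Longrightarrow> x\<in>M \<Longrightarrow> y\<in>M \<Longrightarrow> s (x-y) r = s x r - s y r"
  using rm_distl[of s M x "-y" r] rm_neg[of s M y] rm_sneg[of s M y r] by simp
lemma rm_m1: "right_module s M \<Longrightarrow> x\<in>M \<Longrightarrow> s x (-1) = -x"
  using rm_distr[of s M x 1 "-1"] rm_one[of s M x] rm_s0[of s M x]
  by (simp add: eq_neg_iff_add_eq_0 add.commute)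

lemma submodule_intro:
  assumes "right_module s M" "K \<subseteq> M" "0 \<in> K" "\<And>x y. x\<in>K \<Longrightarrow> y\<in>K \<Longrightarrow> x+y\<in>K"
    "\<And>x r. x\<in>K \<Longrightarrow> s x r \<in> K"
  shows "submodule s K M"
proof -
  have "\<And>x. x\<in>K \<Longrightarrow> -x \<in> K" using assms rm_m1[of s M] by (metis subsetD)
  then show ?thesis using assms unfolding submodule_def right_module_def by (auto simp: subset_iff)
qed

lemma mem_coset: "z \<in> coset x P \<longleftrightarrow> z - x \<in> P"
  unfolding coset_def by (auto simp: image_iff) (metis add_diff_cancel_left' diff_add_cancel add.commute)

lemma coset_self: "right_module s P \<Longrightarrow> x \<in> coset x P"
  by (simp add: mem_coset rm_zero)

lemma coset_eq: "right_module s P \<Longrightarrow> coset x P = coset y P \<longleftrightarrow> x - y \<in> P"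
proof
  assume "right_module s P" "coset x P = coset y P"
  then show "x - y \<in> P" using coset_self[of s P x] by (simp add: mem_coset)
next
  assume m: "right_module s P" and d: "x - y \<in> P"
  show "coset x P = coset y P"
  proof (rule set_eqI)
    fix z
    have "z - y = (z - x) + (x - y)" "z - x = (z - y) - (x - y)" by simp_all
    then show "z \<in> coset x P \<longleftrightarrow> z \<in> coset y P"
      unfolding mem_coset using m d rm_add rm_diff by metis
  qed
qed

lemma in_quot_coset: "right_module s P \<Longrightarrow> C \<in> quot N P \<Longrightarrow> n \<in> C \<Longrightarrow> C = coset n P"
  unfolding quot_def using coset_eq mem_coset
  by (smt (verit, best) mem_Collect_eq)

lemma quot_mem: "right_module s N \<Longrightarrow> P \<subseteq> N \<Longrightarrow> C \<in> quot N P \<Longrightarrow> n \<in> C \<Longrightarrow> n \<in> N"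
  unfolding quot_def coset_def using rm_add by blast

lemma quot_nonempty: "right_module s P \<Longrightarrow> C \<in> quot N P \<Longrightarrow> \<exists>n\<in>N. C = coset n P"
  unfolding quot_def by blast

lemma quot_add_coset: assumes "right_module s P"
  shows "quot_add (coset x P) (coset y P) = coset (x+y) P"
proof (rule set_eqI)
  fix z
  show "z \<in> quot_add (coset x P) (coset y P) \<longleftrightarrow> z \<in> coset (x+y) P"
  proof
    assume "z \<in> quot_add (coset x P) (coset y P)"
    then obtain a b where "z = a + b" "a - x \<in> P" "b - y \<in> P"
      unfolding quot_add_def mem_coset by blast
    moreover have "a + b - (x + y) = (a - x) + (b - y)" by simp
    ultimately show "z \<in> coset (x+y) P" unfolding mem_coset using rm_add[OF assms] by metis
  next
    assume "z \<in> coset (x+y) P"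
    hence "z - x \<in> coset y P" by (simp add: mem_coset algebra_simps)
    moreover have "x \<in> coset x P" using coset_self[OF assms] .
    moreover have "z = x + (z - x)" by simp
    ultimately show "z \<in> quot_add (coset x P) (coset y P)" unfolding quot_add_def by blast
  qed
qed

lemma quot_scal_coset: assumes "right_module s N" "submodule s P N" "x \<in> N"
  shows "quot_scal s P (coset x P) r = coset (s x r) P"
proof (rule set_eqI)
  fix z
  have P: "right_module s P" "P \<subseteq> N" using assms(2) by (auto simp: submodule_def)
  show "z \<in> quot_scal s P (coset x P) r \<longleftrightarrow> z \<in> coset (s x r) P"
  proof
    assume "z \<in> quot_scal s P (coset x P) r"
    then obtain a p where a: "z = s a r + p" "a - x \<in> P" "p \<in> P"
      unfolding quot_scal_def mem_coset by blast
    have "a = x + (a - x)" by simp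
    hence "s a r = s x r + s (a - x) r" using rm_distl[OF assms(1) assms(3), of "a - x" r] P a
      by (metis subsetD)
    hence "z - s x r = s (a - x) r + p" using a by (simp add: algebra_simps)
    then show "z \<in> coset (s x r) P" unfolding mem_coset using P a rm_add rm_scal by metis
  next
    assume "z \<in> coset (s x r) P"
    hence "z - s x r \<in> P" by (simp add: mem_coset)
    moreover have "x \<in> coset x P" using coset_self[OF P(1)] .
    moreover have "z = s x r + (z - s x r)" by simp
    ultimately show "z \<in> quot_scal s P (coset x P) r" unfolding quot_scal_def by blast
  qed
qed

lemma qh_of_rep:
  assumes "right_module sM M" "right_module sN L" "submodule sN Q L"
    "\<forall>x\<in>M. c x \<in> L"
    "\<forall>x\<in>M. \<forall>y\<in>M. c (x+y) - (c x + c y) \<in> Q"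
    "\<forall>x\<in>M. \<forall>r. c (sM x r) - sN (c x) r \<in> Q"
  shows "quot_hom sM M sN L Q (\<lambda>x. coset (c x) Q)"
proof -
  have Q: "right_module sN Q" using assms(3) by (simp add: submodule_def)
  show ?thesis unfolding quot_hom_def
  proof (intro conjI ballI allI)
    fix x assume "x \<in> M" then show "coset (c x) Q \<in> quot L Q" using assms(4) unfolding quot_def by blast
  next
    fix x y assume "x \<in> M" "y \<in> M"
    then show "coset (c (x + y)) Q = quot_add (coset (c x) Q) (coset (c y) Q)"
      using quot_add_coset[OF Q] coset_eq[OF Q] assms(5) by simp
  next
    fix x r assume "x \<in> M"
    then show "coset (c (sM x r)) Q = quot_scal sN Q (coset (c x) Q) r"
      using quot_scal_coset[OF assms(2) assms(3)] assms(4) coset_eq[OF Q] assms(6) by simp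
  qed
qed

lemma classify: fixes a :: "'i::wellorder"
  shows "(\<forall>b. a \<le> b) \<or> (\<exists>b<a. a = osucc b) \<or> is_limit a"
proof -
  { assume nl: "\<not>(\<forall>b. a \<le> b)" and nlim: "\<not> is_limit a"
    from nl obtain b where "b < a" using not_le by blast
    from nlim \<open>b<a\<close> obtain b' where b': "b' < a" "\<not>(\<exists>c. b' < c \<and> c < a)" unfolding is_limit_def by blast
    have "osucc b' = a" unfolding osucc_def
      by (rule Least_equality) (use b' not_less in auto)
    hence "\<exists>b<a. a = osucc b" using b' by auto }
  thus ?thesis by blast
qed

lemma osucc_gt: "a < b \<Longrightarrow> a < osucc a" unfolding osucc_def by (rule LeastI)
lemma osucc_le: "a < b \<Longrightarrow> osucc a \<le> b" unfolding osucc_def by (rule Least_le)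
lemma lt_osucc: "c < osucc a \<Longrightarrow> a < b \<Longrightarrow> c \<le> a"
  by (metis leD not_le_imp_less osucc_le)

lemma sub_from_quot:
  assumes mM: "right_module sM M" and mN: "right_module sN N" and PN: "submodule sN P N"
    and QN: "submodule sN Q N" and fh: "quot_hom sM M sN N P f"
  shows "submodule sM {x\<in>M. f x \<inter> Q \<noteq> {}} M"
proof -
  have P: "right_module sN P" "P \<subseteq> N" using PN by (auto simp: submodule_def)
  have Q: "right_module sN Q" "Q \<subseteq> N" using QN by (auto simp: submodule_def)
  have fq: "\<And>x. x \<in> M \<Longrightarrow> f x \<in> quot N P" using fh by (simp add: quot_hom_def)
  have fa: "\<And>x y. x \<in> M \<Longrightarrow> y \<in> M \<Longrightarrow> f (x+y) = quot_add (f x) (f y)" using fh by (simp add: quot_hom_def)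
  have fs: "\<And>x r. x \<in> M \<Longrightarrow> f (sM x r) = quot_scal sN P (f x) r" using fh by (simp add: quot_hom_def)
  show ?thesis
  proof (rule submodule_intro[OF mM])
    show "{x \<in> M. f x \<inter> Q \<noteq> {}} \<subseteq> M" by blast
  next
    obtain n where n: "n \<in> N" "f 0 = coset n P" using quot_nonempty[OF P(1) fq[OF rm_zero[OF mM]]] by blast
    have "f (sM 0 0) = coset (sN n 0) P" using fs[OF rm_zero[OF mM]] n quot_scal_coset[OF mN PN] by simp
    hence "f 0 = coset 0 P" using rm_s0[OF mM rm_zero[OF mM]] rm_s0[OF mN n(1)] by simp
    hence "0 \<in> f 0 \<inter> Q" using coset_self[OF P(1)] rm_zero[OF Q(1)] by simp
    then show "0 \<in> {x \<in> M. f x \<inter> Q \<noteq> {}}" using rm_zero[OF mM] by blast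
  next
    fix x y assume "x \<in> {x \<in> M. f x \<inter> Q \<noteq> {}}" "y \<in> {x \<in> M. f x \<inter> Q \<noteq> {}}"
    then obtain a b where ab: "x \<in> M" "y \<in> M" "a \<in> f x" "a \<in> Q" "b \<in> f y" "b \<in> Q" by blast
    have "f x = coset a P" "f y = coset b P" using in_quot_coset[OF P(1)] fq ab by auto
    hence "f (x+y) = coset (a+b) P" using fa ab quot_add_coset[OF P(1)] by simp
    hence "a + b \<in> f (x+y) \<inter> Q" using coset_self[OF P(1)] rm_add[OF Q(1)] ab by simp
    then show "x + y \<in> {x \<in> M. f x \<inter> Q \<noteq> {}}" using rm_add[OF mM] ab by blast
  next
    fix x r assume "x \<in> {x \<in> M. f x \<inter> Q \<noteq> {}}"
    then obtain a where ab: "x \<in> M" "a \<in> f x" "a \<in> Q" by blast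
    have "f x = coset a P" using in_quot_coset[OF P(1)] fq ab by auto
    hence "f (sM x r) = coset (sN a r) P" using fs ab quot_scal_coset[OF mN PN] Q(2) by auto
    hence "sN a r \<in> f (sM x r) \<inter> Q" using coset_self[OF P(1)] rm_scal[OF Q(1)] ab by simp
    then show "sM x r \<in> {x \<in> M. f x \<inter> Q \<noteq> {}}" using rm_scal[OF mM] ab by blast
  qed
qed

theorem lemma1p5:
  fixes sM :: "'m::ab_group_add \<Rightarrow> 'r::ring_1 \<Rightarrow> 'm"
    and sN :: "'n::ab_group_add \<Rightarrow> 'r \<Rightarrow> 'n"
    and M :: "'m set" and N :: "'n set"
    and \<tau> :: "'i::wellorder" and Nf :: "'i \<Rightarrow> 'n set"
  assumes "right_module sM M"
    and "right_module sN N"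
    and "filtration sN N \<tau> Nf"
    and "finitely_generated sM M"
    and "\<forall>a<\<tau>. \<forall>K f. submodule sN K (Nf (osucc a)) \<and> Nf a \<subseteq> K \<and>
            quot_hom sM M sN (Nf (osucc a)) K f \<longrightarrow>
            (\<exists>g. mod_hom sM M sN (Nf (osucc a)) g \<and> (\<forall>x\<in>M. f x = coset (g x) K))"
  shows "N_projective sM M sN N"
proof -
  note mM = assms(1) and mN = assms(2) and hyp = assms(5)
  have subF: "\<And>a. a \<le> \<tau> \<Longrightarrow> submodule sN (Nf a) N" using assms(3) unfolding filtration_def by blast
  have modF: "\<And>a. a \<le> \<tau> \<Longrightarrow> right_module sN (Nf a)" "\<And>a. a \<le> \<tau> \<Longrightarrow> Nf a \<subseteq> N"
    using subF by (auto simp: submodule_def)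
  have bot: "\<And>a. (\<forall>b. a \<le> b) \<Longrightarrow> Nf a = {0}" using assms(3) unfolding filtration_def by blast
  have sucF: "\<And>a. a < \<tau> \<Longrightarrow> Nf a \<subseteq> Nf (osucc a)" using assms(3) unfolding filtration_def by blast
  have limF: "\<And>a. a \<le> \<tau> \<Longrightarrow> is_limit a \<Longrightarrow> Nf a = (\<Union>b\<in>{b. b < a}. Nf b)"
    using assms(3) unfolding filtration_def by blast
  have NfT: "Nf \<tau> = N" using assms(3) unfolding filtration_def by blast
  obtain G where G: "finite G" "G \<subseteq> M" "\<forall>Q. submodule sM Q M \<and> G \<subseteq> Q \<longrightarrow> Q = M"
    using assms(4) unfolding finitely_generated_def by (elim exE conjE) 
  have mono: "Nf b \<subseteq> Nf c" if "b \<le> c" "c \<le> \<tau>" for b c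
    using that
  proof (induction c rule: less_induct)
    case (less c)
    show ?case
    proof (cases "b = c")
      case True then show ?thesis by simp
    next
      case False
      with less.prems have bc: "b < c" by simp
      hence nb: "\<not> (\<forall>d. c \<le> d)" using leD by blast
      consider (suc) d where "d < c" "c = osucc d" | (lim) "is_limit c" using classify[of c] nb by blast
      then show ?thesis
      proof cases
        case suc
        have "b \<le> d" using lt_osucc[of b d c] bc suc by simp
        hence "Nf b \<subseteq> Nf d" using less.IH[of d] suc less.prems by simp
        also have "\<dots> \<subseteq> Nf c" using sucF[of d] suc less.prems by simp
        finally show ?thesis .
      next
        case lim
        then show ?thesis using limF[of c] less.prems bc by auto
      qed
    qed
  qed
  show ?thesis unfolding N_projective_def
  proof (intro allI impI, elim conjE)
    fix P f assume PN: "submodule sN P N" and fh0: "quot_hom sM M sN N P f"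
    have P: "right_module sN P" "P \<subseteq> N" using PN by (auto simp: submodule_def)
    have claim: "\<forall>f. quot_hom sM M sN N P f \<and> (\<forall>x\<in>M. f x \<inter> Nf a \<noteq> {}) \<longrightarrow>
        (\<exists>g. mod_hom sM M sN N g \<and> (\<forall>x\<in>M. f x = coset (g x) P))" if "a \<le> \<tau>" for a
      using that
    proof (induction a rule: less_induct)
      case (less a)
      show ?case
      proof (intro allI impI, elim conjE)
        fix f assume fh: "quot_hom sM M sN N P f" and meet: "\<forall>x\<in>M. f x \<inter> Nf a \<noteq> {}"
        have fq: "\<And>x. x \<in> M \<Longrightarrow> f x \<in> quot N P" using fh by (simp add: quot_hom_def)
        have fa: "\<And>x y. x \<in> M \<Longrightarrow> y \<in> M \<Longrightarrow> f (x+y) = quot_add (f x) (f y)" using fh by (simp add: quot_hom_def)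
        have fs: "\<And>x r. x \<in> M \<Longrightarrow> f (sM x r) = quot_scal sN P (f x) r" using fh by (simp add: quot_hom_def)
        consider (least) "\<forall>d. a \<le> d" | (suc) d where "d < a" "a = osucc d" | (lim) "is_limit a"
          using classify[of a] by blast
        then show "\<exists>g. mod_hom sM M sN N g \<and> (\<forall>x\<in>M. f x = coset (g x) P)"
        proof cases
          case least
          have "\<forall>x\<in>M. f x = coset 0 P"
          proof
            fix x assume "x \<in> M"
            then have "0 \<in> f x" using meet bot[OF least] by auto
            then show "f x = coset 0 P" using in_quot_coset[OF P(1) fq] \<open>x \<in> M\<close> by blast
          qed
          moreover have "mod_hom sM M sN N (\<lambda>x. 0)"
            unfolding mod_hom_def using rm_zero[OF mN] rm_0s[OF mN] by simp
          ultimately show ?thesis by blast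
        next
          case lim
          have "\<exists>b<a. \<forall>x\<in>H. f x \<inter> Nf b \<noteq> {}" if "finite H" "H \<subseteq> M" for H
            using that
          proof (induction H rule: finite_induct)
            case empty then show ?case using lim by (auto simp: is_limit_def)
          next
            case (insert x H)
            then obtain b where b: "b < a" "\<forall>x\<in>H. f x \<inter> Nf b \<noteq> {}" by auto
            have "x \<in> M" using insert by auto
            then obtain n where n: "n \<in> f x" "n \<in> Nf a" using meet by blast
            then obtain b' where b': "b' < a" "n \<in> Nf b'" using limF[OF less.prems lim] by auto
            have "max b b' < a" using b b' by simp
            moreover have "Nf b \<subseteq> Nf (max b b')" "Nf b' \<subseteq> Nf (max b b')"
            proof -
              have "max b b' \<le> \<tau>" using \<open>max b b' < a\<close> less.prems by (meson less_imp_le order.trans)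
              then show "Nf b \<subseteq> Nf (max b b')" "Nf b' \<subseteq> Nf (max b b')"
                using mono[of b "max b b'"] mono[of b' "max b b'"] by simp_all
            qed
            ultimately show ?case using b b' n by blast
          qed
          then obtain b where b: "b < a" "\<forall>x\<in>G. f x \<inter> Nf b \<noteq> {}" using G by blast
          have "submodule sM {x\<in>M. f x \<inter> Nf b \<noteq> {}} M"
            by (rule sub_from_quot[OF mM mN PN subF fh]) (use b less.prems in simp)
          moreover have "G \<subseteq> {x\<in>M. f x \<inter> Nf b \<noteq> {}}" using G(2) b(2) by blast
          ultimately have "{x\<in>M. f x \<inter> Nf b \<noteq> {}} = M" using G(3) by simp
          hence "\<forall>x\<in>M. f x \<inter> Nf b \<noteq> {}" by blast
          then show ?thesis using less.IH[of b] b less.prems fh by simp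
        next
          case suc
          have dt: "d < \<tau>" using suc less.prems by simp
          have mA: "right_module sN (Nf a)" "Nf a \<subseteq> N" using modF less.prems by auto
          have mD: "right_module sN (Nf d)" "Nf d \<subseteq> Nf a"
            using modF[of d] mono[of d a] suc less.prems dt by auto
          define K where "K = {k \<in> Nf a. \<exists>m\<in>Nf d. \<exists>p\<in>P. k = m + p}"
          have KA: "submodule sN K (Nf a)"
          proof (rule submodule_intro[OF mA(1)])
            show "K \<subseteq> Nf a" by (auto simp: K_def)
            have "(0::'n) = 0 + 0" by simp
            then show "0 \<in> K" unfolding K_def using rm_zero[OF mA(1)] rm_zero[OF mD(1)] rm_zero[OF P(1)] by blast
          next
            fix x y assume "x \<in> K" "y \<in> K"
            then obtain m1 p1 m2 p2 where A: "x \<in> Nf a" "y \<in> Nf a" "m1 \<in> Nf d" "p1 \<in> P" "x = m1 + p1"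
              "m2 \<in> Nf d" "p2 \<in> P" "y = m2+p2" unfolding K_def by blast
            have "x + y = (m1+m2) + (p1+p2)" using A by (simp add: algebra_simps)
            then show "x + y \<in> K" unfolding K_def using A rm_add[OF mA(1)] rm_add[OF mD(1)] rm_add[OF P(1)] by blast
          next
            fix x r assume "x \<in> K"
            then obtain m p where A: "x \<in> Nf a" "m \<in> Nf d" "p \<in> P" "x = m + p" unfolding K_def by blast
            have "m \<in> N" "p \<in> N" using A mD(2) mA(2) P(2) by auto
            then have "sN x r = sN m r + sN p r" using A rm_distl[OF mN] by blast
            then show "sN x r \<in> K" unfolding K_def using A rm_scal[OF mA(1)] rm_scal[OF mD(1)] rm_scal[OF P(1)] by blast
          qed
          have KM: "right_module sN K" using KA by (simp add: submodule_def)
          have DK: "Nf d \<subseteq> K"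
          proof
            fix x assume "x \<in> Nf d"
            moreover have "x = x + 0" by simp
            ultimately show "x \<in> K" unfolding K_def using mD(2) rm_zero[OF P(1)] by blast
          qed
          have PK: "\<And>p. p \<in> Nf a \<Longrightarrow> p \<in> P \<Longrightarrow> p \<in> K"
          proof -
            fix p assume "p \<in> Nf a" "p \<in> P"
            moreover have "p = 0 + p" by simp
            ultimately show "p \<in> K" unfolding K_def using rm_zero[OF mD(1)] by blast
          qed
          define n where "n x = (SOME n. n \<in> f x \<and> n \<in> Nf a)" for x
          have n: "n x \<in> f x" "n x \<in> Nf a" if "x \<in> M" for x
          proof -
            have "\<exists>n. n \<in> f x \<and> n \<in> Nf a" using meet that by blast
            then have "n x \<in> f x \<and> n x \<in> Nf a" unfolding n_def by (rule someI_ex)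
            then show "n x \<in> f x" "n x \<in> Nf a" by auto
          qed
          have nN: "n x \<in> N" if "x \<in> M" for x using n[OF that] mA(2) by auto
          have fx: "f x = coset (n x) P" if "x \<in> M" for x
            using in_quot_coset[OF P(1) fq[OF that] n(1)[OF that]] .
          have nadd: "n (x+y) - (n x + n y) \<in> P" if "x \<in> M" "y \<in> M" for x y
          proof -
            have "coset (n (x+y)) P = coset (n x + n y) P"
              using fx[of "x+y"] fa[OF that] fx[OF that(1)] fx[OF that(2)] quot_add_coset[OF P(1)]
                rm_add[OF mM that] by simp
            then show ?thesis using coset_eq[OF P(1)] by blast
          qed
          have nscal: "n (sM x r) - sN (n x) r \<in> P" if "x \<in> M" for x r
          proof -
            have "coset (n (sM x r)) P = coset (sN (n x) r) P"
              using fx[of "sM x r"] fs[OF that] fx[OF that] quot_scal_coset[OF mN PN nN[OF that]]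
                rm_scal[OF mM that] by simp
            then show ?thesis using coset_eq[OF P(1)] by blast
          qed
          have qh1: "quot_hom sM M sN (Nf a) K (\<lambda>x. coset (n x) K)"
          proof (rule qh_of_rep[OF mM mA(1) KA])
            show "\<forall>x\<in>M. n x \<in> Nf a" using n by blast
            show "\<forall>x\<in>M. \<forall>y\<in>M. n (x + y) - (n x + n y) \<in> K"
              using PK nadd n rm_diff[OF mA(1)] rm_add[OF mA(1)] rm_add[OF mM] by simp
            show "\<forall>x\<in>M. \<forall>r. n (sM x r) - sN (n x) r \<in> K"
              using PK nscal n rm_diff[OF mA(1)] rm_scal[OF mA(1)] rm_scal[OF mM] by simp
          qed
          have "\<exists>g. mod_hom sM M sN (Nf a) g \<and> (\<forall>x\<in>M. coset (n x) K = coset (g x) K)"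
            using hyp[rule_format, OF dt, of K "\<lambda>x. coset (n x) K"] KA DK qh1
            by (simp add: suc(2)[symmetric])
          then obtain g' where g': "mod_hom sM M sN (Nf a) g'" "\<forall>x\<in>M. coset (n x) K = coset (g' x) K"
            by blast
          have g'A: "\<And>x. x \<in> M \<Longrightarrow> g' x \<in> Nf a" and g'add: "\<And>x y. x \<in> M \<Longrightarrow> y \<in> M \<Longrightarrow> g' (x+y) = g' x + g' y"
            and g's: "\<And>x r. x \<in> M \<Longrightarrow> g' (sM x r) = sN (g' x) r"
            using g'(1) unfolding mod_hom_def by auto
          have g'N: "\<And>x. x \<in> M \<Longrightarrow> g' x \<in> N" using g'A mA(2) by auto
          define c where "c x = n x - g' x" for x
          have cK: "c x \<in> K" if "x \<in> M" for x
            using g'(2) that coset_eq[OF KM] unfolding c_def by blast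
          have qh2: "quot_hom sM M sN N P (\<lambda>x. coset (c x) P)"
          proof (rule qh_of_rep[OF mM mN PN])
            show "\<forall>x\<in>M. c x \<in> N" unfolding c_def using nN g'N rm_diff[OF mN] by blast
            show "\<forall>x\<in>M. \<forall>y\<in>M. c (x + y) - (c x + c y) \<in> P"
            proof (intro ballI)
              fix x y assume xy: "x \<in> M" "y \<in> M"
              have "c (x + y) - (c x + c y) = n (x+y) - (n x + n y)"
                unfolding c_def using g'add[OF xy] by (simp add: algebra_simps)
              then show "c (x + y) - (c x + c y) \<in> P" using nadd[OF xy] by simp
            qed
            show "\<forall>x\<in>M. \<forall>r. c (sM x r) - sN (c x) r \<in> P"
            proof (intro ballI allI)
              fix x r assume x: "x \<in> M"
              have "sN (c x) r = sN (n x) r - sN (g' x) r"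
                unfolding c_def using rm_sdiff[OF mN nN[OF x] g'N[OF x]] .
              then have "c (sM x r) - sN (c x) r = n (sM x r) - sN (n x) r"
                unfolding c_def using g's[OF x] by (simp add: algebra_simps)
              then show "c (sM x r) - sN (c x) r \<in> P" using nscal[OF x] by simp
            qed
          qed
          have meet2: "\<forall>x\<in>M. coset (c x) P \<inter> Nf d \<noteq> {}"
          proof
            fix x assume x: "x \<in> M"
            then obtain m p where A: "m \<in> Nf d" "p \<in> P" "c x = m + p" using cK unfolding K_def by blast
            have "m - c x = - p" using A by simp
            then have "m \<in> coset (c x) P" unfolding mem_coset using rm_neg[OF P(1) A(2)] by simp
            then show "coset (c x) P \<inter> Nf d \<noteq> {}" using A by blast
          qed
          obtain h where h: "mod_hom sM M sN N h" "\<forall>x\<in>M. coset (c x) P = coset (h x) P"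
            using less.IH[of d] suc less.prems dt qh2 meet2 by (meson less_imp_le)
          have hN: "\<And>x. x \<in> M \<Longrightarrow> h x \<in> N" and hadd: "\<And>x y. x \<in> M \<Longrightarrow> y \<in> M \<Longrightarrow> h (x+y) = h x + h y"
            and hs: "\<And>x r. x \<in> M \<Longrightarrow> h (sM x r) = sN (h x) r"
            using h(1) unfolding mod_hom_def by auto
          have "mod_hom sM M sN N (\<lambda>x. g' x + h x)"
            unfolding mod_hom_def
          proof (intro conjI ballI allI)
            fix x assume x: "x \<in> M"
            show "g' x + h x \<in> N" using rm_add[OF mN g'N[OF x] hN[OF x]] .
            fix r show "g' (sM x r) + h (sM x r) = sN (g' x + h x) r"
              using g's[OF x] hs[OF x] rm_distl[OF mN g'N[OF x] hN[OF x]] by simp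
          next
            fix x y assume xy: "x \<in> M" "y \<in> M"
            show "g' (x + y) + h (x + y) = g' x + h x + (g' y + h y)"
              using g'add[OF xy] hadd[OF xy] by (simp add: algebra_simps)
          qed
          moreover have "\<forall>x\<in>M. f x = coset (g' x + h x) P"
          proof
            fix x assume x: "x \<in> M"
            have "c x - h x \<in> P" using h(2) x coset_eq[OF P(1)] by blast
            moreover have "n x - (g' x + h x) = c x - h x" unfolding c_def by (simp add: algebra_simps)
            ultimately have "n x - (g' x + h x) \<in> P" by metis
            then show "f x = coset (g' x + h x) P" using fx[OF x] coset_eq[OF P(1)] by simp
          qed
          ultimately show ?thesis by blast
        qed
      qed
    qed
    have "\<forall>x\<in>M. f x \<inter> Nf \<tau> \<noteq> {}"
    proof
      fix x assume "x \<in> M"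
      then have "f x \<in> quot N P" using fh0 by (simp add: quot_hom_def)
      then obtain n where "n \<in> N" "f x = coset n P" using quot_nonempty[OF P(1)] by blast
      then show "f x \<inter> Nf \<tau> \<noteq> {}" using NfT coset_self[OF P(1)] by blast
    qed
    then show "\<exists>g. mod_hom sM M sN N g \<and> (\<forall>x\<in>M. f x = coset (g x) P)"
      using claim[of \<tau>] fh0 by simp
  qed
qed

end
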